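(* For a $d$-dimensional state ensemble $\Omega=\{(p_j,\rho_j)\}_{j=0}^{k-1}$, the optimal discrimination probability via DIO, $\widetilde{P}_{\mathrm{suc,DIO}}(\Omega)$, cannot be improved with the assistance of any coherent state, i.e. discriminating $\{(p_j,\rho_j\otimes\tau)\}_j$ via DIO for any ancillary state $\tau$ gives no higher success probability.
   Context: Let $\Delta(\rho)=\sum_i |i\rangle\langle i|\rho|i\rangle\langle i|$ be the completely dephasing channel in the computational basis. DIO (dephasing-covariant incoherent operations) are channels $\mathcal{E}$ with $\Delta\circ\mathcal{E}=\mathcal{E}\circ\Delta$. Quantum state discrimination via free operations $\mathcal{O}$: $\widetilde{P}_{\mathrm{suc},\mathcal{O}}(\Omega)=\sup\sum_j p_j\mathrm{tr}[\mathcal{N}_{A\to BA'}(\rho_j)(|j\rangle\langle j|_B\otimes I_{A'})]$ over $\mathcal{N}_{A\to BA'}\in\mathcal{O}$, $\dim B=k$, $A'\cong A$. *)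

theory Defs
  imports "Jordan_Normal_Form.Matrix"
begin

text \<open>The computational basis of a
  d-dimensional system is the standard basis indexed by 0..d-1; the tensor
  product of a system of dimension n with one of dimension m has basis index
  i*m + j for the pair (i,j) (Kronecker convention).\<close>

definition adj :: "complex mat \<Rightarrow> complex mat" where
  "adj A = mat (dim_col A) (dim_row A) (\<lambda>(i,j). cnj (A $$ (j,i)))"

definition tr :: "complex mat \<Rightarrow> complex" where
  "tr A = (\<Sum>i<dim_row A. A $$ (i,i))"

definition kron :: "complex mat \<Rightarrow> complex mat \<Rightarrow> complex mat" where
  "kron A B = mat (dim_row A * dim_row B) (dim_col A * dim_col B)
     (\<lambda>(i,j). A $$ (i div dim_row B, j div dim_col B) * B $$ (i mod dim_row B, j mod dim_col B))"

definition psd :: "nat \<Rightarrow> complex mat \<Rightarrow> bool" where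
  "psd n A \<longleftrightarrow> A \<in> carrier_mat n n
     \<and> (\<forall>i<n. \<forall>j<n. A $$ (i,j) = cnj (A $$ (j,i)))
     \<and> (\<forall>v \<in> carrier_vec n. 0 \<le> Re (\<Sum>i<n. \<Sum>j<n. cnj (v $ i) * A $$ (i,j) * v $ j))"

definition density :: "nat \<Rightarrow> complex mat \<Rightarrow> bool" where
  "density n \<rho> \<longleftrightarrow> psd n \<rho> \<and> tr \<rho> = 1"

definition msum :: "nat \<Rightarrow> nat \<Rightarrow> complex mat list \<Rightarrow> complex mat" where
  "msum r c As = foldr (+) As (0\<^sub>m r c)"

definition channel :: "nat \<Rightarrow> nat \<Rightarrow> (complex mat \<Rightarrow> complex mat) \<Rightarrow> bool" where
  "channel n m E \<longleftrightarrow> (\<exists>Ks. (\<forall>K \<in> set Ks. K \<in> carrier_mat m n)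
      \<and> msum n n (map (\<lambda>K. adj K * K) Ks) = 1\<^sub>m n
      \<and> (\<forall>X \<in> carrier_mat n n. E X = msum m m (map (\<lambda>K. K * X * adj K) Ks)))"

definition dephase :: "complex mat \<Rightarrow> complex mat" where
  "dephase A = mat (dim_row A) (dim_col A) (\<lambda>(i,j). if i = j then A $$ (i,j) else 0)"

definition DIO :: "nat \<Rightarrow> nat \<Rightarrow> (complex mat \<Rightarrow> complex mat) \<Rightarrow> bool" where
  "DIO n m E \<longleftrightarrow> channel n m E \<and> (\<forall>X \<in> carrier_mat n n. dephase (E X) = E (dephase X))"

definition proj :: "nat \<Rightarrow> nat \<Rightarrow> complex mat" where
  "proj k j = mat k k (\<lambda>(a,b). if a = j \<and> b = j then 1 else 0)"

definition ensemble :: "nat \<Rightarrow> nat \<Rightarrow> (nat \<Rightarrow> real) \<Rightarrow> (nat \<Rightarrow> complex mat) \<Rightarrow> bool" where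
  "ensemble d k p \<rho> \<longleftrightarrow> k \<ge> 1 \<and> (\<forall>j<k. 0 \<le> p j \<and> density d (\<rho> j)) \<and> (\<Sum>j<k. p j) = 1"

text \<open>Optimal success probability of discriminating the ensemble via DIO
  N : A \<rightarrow> B A', with dim A = dim A' = d and dim B = k (B is the first factor).\<close>
definition Psuc_DIO :: "nat \<Rightarrow> nat \<Rightarrow> (nat \<Rightarrow> real) \<Rightarrow> (nat \<Rightarrow> complex mat) \<Rightarrow> real" where
  "Psuc_DIO d k p \<rho> = Sup {(\<Sum>j<k. p j * Re (tr (N (\<rho> j) * kron (proj k j) (1\<^sub>m d))))
      | N. DIO d (k * d) N}"

end

theory Submission
  imports Defs
begin


lemma mult_index:
  assumes "A \<in> carrier_mat a b" "B \<in> carrier_mat b c" "i < a" "j < c"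
  shows "(A * B) $$ (i,j) = (\<Sum>t<b. A $$ (i,t) * B $$ (t,j))"
  using assms by (auto simp: scalar_prod_def atLeast0LessThan intro!: sum.cong)

lemma msum_carrier:
  "\<forall>A\<in>set As. A \<in> carrier_mat r c \<Longrightarrow> msum r c As \<in> carrier_mat r c"
  by (induction As) (auto simp: msum_def)

lemma msum_index:
  "\<forall>A\<in>set As. A \<in> carrier_mat r c \<Longrightarrow> i < r \<Longrightarrow> j < c \<Longrightarrow>
   msum r c As $$ (i,j) = (\<Sum>A\<leftarrow>As. A $$ (i,j))"
proof (induction As)
  case Nil then show ?case by (simp add: msum_def)
next
  case (Cons A As)
  have "msum r c As \<in> carrier_mat r c" using Cons msum_carrier by auto
  then show ?case using Cons by (auto simp: msum_def)
qed

lemma sum_lessThan_add: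
  fixes g :: "nat \<Rightarrow> 'a::comm_monoid_add"
  shows "(\<Sum>c<N+m. g c) = (\<Sum>c<N. g c) + (\<Sum>a<m. g (N+a))"
  by (induction m) (simp_all add: add.assoc)

lemma sum_split_mult:
  fixes g :: "nat \<Rightarrow> 'a::comm_monoid_add"
  shows "(\<Sum>c<n*m. g c) = (\<Sum>r<n. \<Sum>a<m. g (r*m+a))"
proof (induction n)
  case 0 then show ?case by simp
next
  case (Suc n)
  have "(\<Sum>c<Suc n*m. g c) = (\<Sum>c<n*m + m. g c)" by (simp add: add.commute)
  also have "\<dots> = (\<Sum>c<n*m. g c) + (\<Sum>a<m. g (n*m+a))"
    by (rule sum_lessThan_add)
  finally show ?case using Suc by simp
qed

lemma sum_list_sum_comm:
  fixes f :: "'b \<Rightarrow> nat \<Rightarrow> 'a::comm_monoid_add"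
  shows "(\<Sum>x\<leftarrow>xs. \<Sum>a\<in>S. f x a) = (\<Sum>a\<in>S. \<Sum>x\<leftarrow>xs. f x a)"
  by (induction xs) (auto simp: sum.distrib)



definition Aop :: "nat \<Rightarrow> nat \<Rightarrow> (nat \<Rightarrow> complex) \<Rightarrow> nat \<Rightarrow> complex mat" where
  "Aop d m w l = mat (d*m) d (\<lambda>(r,c). if r = c*m + l then w l else 0)"

definition Bop :: "nat \<Rightarrow> nat \<Rightarrow> nat \<Rightarrow> complex mat" where
  "Bop n m a = mat n (n*m) (\<lambda>(r,c). if c = r*m + a then 1 else 0)"

definition ptr :: "nat \<Rightarrow> nat \<Rightarrow> complex mat \<Rightarrow> complex mat" where
  "ptr n m Y = mat n n (\<lambda>(i,j). \<Sum>a<m. Y $$ (i*m+a, j*m+a))"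

lemma idx_lt: "(r::nat) < n \<Longrightarrow> a < m \<Longrightarrow> r*m+a < n*m"
proof -
  assume "r < n" "a < m"
  then have "r*m + a < r*m + m" by simp
  also have "\<dots> = Suc r * m" by simp
  also have "\<dots> \<le> n*m" using \<open>r<n\<close> by (intro mult_le_mono1) simp
  finally show ?thesis .
qed

lemma adj_carrier[simp]: "adj A \<in> carrier_mat (dim_col A) (dim_row A)"
  by (simp add: adj_def)

lemma adj_dims[simp]: "dim_row (adj A) = dim_col A" "dim_col (adj A) = dim_row A"
  by (simp_all add: adj_def)

lemma adj_index: "i < dim_col A \<Longrightarrow> j < dim_row A \<Longrightarrow> adj A $$ (i,j) = cnj (A $$ (j,i))"
  by (simp add: adj_def)

lemma B_mult:
  assumes "M \<in> carrier_mat (n*m) c" "a < m"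
  shows "Bop n m a * M = mat n c (\<lambda>(r,j). M $$ (r*m+a, j))"
proof (rule eq_matI)
  fix i j assume ij: "i < dim_row (mat n c (\<lambda>(r,j). M $$ (r*m+a, j)))" "j < dim_col (mat n c (\<lambda>(r,j). M $$ (r*m+a, j)))"
  then have "i < n" "j < c" by auto
  have "(Bop n m a * M) $$ (i,j) = (\<Sum>t<n*m. Bop n m a $$ (i,t) * M $$ (t,j))"
    by (rule mult_index[OF _ assms(1)]) (use \<open>i<n\<close> \<open>j<c\<close> in \<open>auto simp: Bop_def\<close>)
  also have "\<dots> = (\<Sum>t<n*m. if t = i*m+a then M $$ (t,j) else 0)"
    using \<open>i<n\<close> by (intro sum.cong) (auto simp: Bop_def)
  also have "\<dots> = M $$ (i*m+a, j)" using idx_lt[OF \<open>i<n\<close> assms(2)] by simp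
  finally show "(Bop n m a * M) $$ (i,j) = mat n c (\<lambda>(r,j). M $$ (r*m+a, j)) $$ (i,j)"
    using \<open>i<n\<close> \<open>j<c\<close> by simp
qed (use assms in \<open>auto simp: Bop_def\<close>)

lemma mult_A:
  assumes "M \<in> carrier_mat r (d*m)" "l < m"
  shows "M * Aop d m w l = mat r d (\<lambda>(i,j). M $$ (i, j*m+l) * w l)"
proof (rule eq_matI)
  fix i j assume ij: "i < dim_row (mat r d (\<lambda>(i,j). M $$ (i, j*m+l) * w l))" "j < dim_col (mat r d (\<lambda>(i,j). M $$ (i, j*m+l) * w l))"
  then have "i < r" "j < d" by auto
  have "(M * Aop d m w l) $$ (i,j) = (\<Sum>t<d*m. M $$ (i,t) * Aop d m w l $$ (t,j))"
    by (rule mult_index[OF assms(1)]) (use \<open>i<r\<close> \<open>j<d\<close> in \<open>auto simp: Aop_def\<close>)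
  also have "\<dots> = (\<Sum>t<d*m. if t = j*m+l then M $$ (i,t) * w l else 0)"
    using \<open>j<d\<close> by (intro sum.cong) (auto simp: Aop_def)
  also have "\<dots> = M $$ (i, j*m+l) * w l" using idx_lt[OF \<open>j<d\<close> assms(2)] by simp
  finally show "(M * Aop d m w l) $$ (i,j) = mat r d (\<lambda>(i,j). M $$ (i, j*m+l) * w l) $$ (i,j)"
    using \<open>i<r\<close> \<open>j<d\<close> by simp
qed (use assms in \<open>auto simp: Aop_def\<close>)

lemma BKA:
  assumes "K \<in> carrier_mat (n*m) (d*m)" "a < m" "l < m"
  shows "Bop n m a * K * Aop d m w l = mat n d (\<lambda>(r,i). K $$ (r*m+a, i*m+l) * w l)"
proof -
  have "Bop n m a * K = mat n (d*m) (\<lambda>(r,j). K $$ (r*m+a, j))" using B_mult[OF assms(1,2)] .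
  moreover have "mat n (d*m) (\<lambda>(r,j). K $$ (r*m+a, j)) * Aop d m w l
     = mat n d (\<lambda>(i,j). mat n (d*m) (\<lambda>(r,j). K $$ (r*m+a, j)) $$ (i, j*m+l) * w l)"
    by (rule mult_A) (use assms in auto)
  moreover have "\<dots> = mat n d (\<lambda>(r,i). K $$ (r*m+a, i*m+l) * w l)"
    by (rule eq_matI) (auto simp: idx_lt assms)
  ultimately show ?thesis by simp
qed



definition KL :: "nat \<Rightarrow> nat \<Rightarrow> nat \<Rightarrow> (nat \<Rightarrow> complex) \<Rightarrow> complex mat list \<Rightarrow> complex mat list" where
  "KL n d m w Ks = concat (map (\<lambda>K. concat (map (\<lambda>a. map (\<lambda>l. Bop n m a * K * Aop d m w l) [0..<m]) [0..<m])) Ks)"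

lemma sum_list_upt_sum: "(\<Sum>l\<leftarrow>[0..<m]. f l) = (\<Sum>l<m. f l)"
  by (simp add: interv_sum_list_conv_sum_set_nat atLeast0LessThan)

lemma sum_list_map_concat: "(\<Sum>x\<leftarrow>concat xss. f x) = (\<Sum>xs\<leftarrow>xss. \<Sum>x\<leftarrow>xs. f x)"
  by (induction xss) simp_all

lemma adj_carrier'[simp]: "A \<in> carrier_mat r c \<Longrightarrow> adj A \<in> carrier_mat c r"
  by (simp add: adj_def)

lemma KL_sum: "(\<Sum>X\<leftarrow>KL n d m w Ks. f X) = (\<Sum>K\<leftarrow>Ks. \<Sum>a<m. \<Sum>l<m. f (Bop n m a * K * Aop d m w l))"
  by (induction Ks) (simp_all add: KL_def sum_list_upt_sum sum_list_map_concat o_def)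

lemma KL_carrier:
  assumes "\<forall>K\<in>set Ks. K \<in> carrier_mat (n*m) (d*m)"
  shows "\<forall>X\<in>set (KL n d m w Ks). X \<in> carrier_mat n d"
proof
  fix X assume "X \<in> set (KL n d m w Ks)"
  then obtain K a l where K: "K \<in> set Ks" and X: "X = Bop n m a * K * Aop d m w l"
    by (auto simp: KL_def)
  have B: "Bop n m a \<in> carrier_mat n (n*m)" by (simp add: Bop_def)
  have A: "Aop d m w l \<in> carrier_mat (d*m) d" by (simp add: Aop_def)
  show "X \<in> carrier_mat n d" unfolding X using B A K assms by (meson mult_carrier_mat)
qed



lemma H2: "X \<in> carrier_mat a b \<Longrightarrow> adj X * X \<in> carrier_mat b b"
  using adj_carrier' by (rule mult_carrier_mat)

lemma H3: "X \<in> carrier_mat a b \<Longrightarrow> Y \<in> carrier_mat b b \<Longrightarrow> X * Y * adj X \<in> carrier_mat a a"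
  by (meson adj_carrier' mult_carrier_mat)

lemma H6: "\<forall>x\<in>set xs. x \<in> carrier_mat a b \<Longrightarrow> \<forall>A\<in>set (map (\<lambda>K. adj K * K) xs). A \<in> carrier_mat b b"
  using H2 by fastforce

lemma H7: "\<forall>x\<in>set xs. x \<in> carrier_mat a b \<Longrightarrow> Y \<in> carrier_mat b b \<Longrightarrow>
  \<forall>A\<in>set (map (\<lambda>K. K * Y * adj K) xs). A \<in> carrier_mat a a"
  using H3 by fastforce

lemma H4:
  assumes "M \<in> carrier_mat a b" "i < b" "j < b"
  shows "(adj M * M) $$ (i,j) = (\<Sum>t<a. cnj (M $$ (t,i)) * M $$ (t,j))"
proof -
  have "(adj M * M) $$ (i,j) = (\<Sum>t<a. adj M $$ (i,t) * M $$ (t,j))"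
    by (rule mult_index[OF adj_carrier'[OF assms(1)] assms])
  also have "\<dots> = (\<Sum>t<a. cnj (M $$ (t,i)) * M $$ (t,j))"
    using assms by (intro sum.cong refl) (simp add: adj_index)
  finally show ?thesis .
qed

lemma H5:
  assumes M: "M \<in> carrier_mat a b" and X: "X \<in> carrier_mat b b" and ij: "i < a" "j < a"
  shows "(M * X * adj M) $$ (i,j) = (\<Sum>v<b. \<Sum>u<b. M $$ (i,u) * X $$ (u,v) * cnj (M $$ (j,v)))"
proof -
  have MX: "M * X \<in> carrier_mat a b" using M X by (rule mult_carrier_mat)
  have "(M * X * adj M) $$ (i,j) = (\<Sum>v<b. (M * X) $$ (i,v) * adj M $$ (v,j))"
    by (rule mult_index[OF MX adj_carrier'[OF M] ij])
  also have "\<dots> = (\<Sum>v<b. (\<Sum>u<b. M $$ (i,u) * X $$ (u,v)) * cnj (M $$ (j,v)))"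
  proof (intro sum.cong refl)
    fix v assume v: "v \<in> {..<b}"
    have "(M * X) $$ (i,v) = (\<Sum>u<b. M $$ (i,u) * X $$ (u,v))"
      using v by (intro mult_index[OF M X ij(1)]) simp
    moreover have "adj M $$ (v,j) = cnj (M $$ (j,v))" using v M ij by (simp add: adj_index)
    ultimately show "(M * X) $$ (i,v) * adj M $$ (v,j) = (\<Sum>u<b. M $$ (i,u) * X $$ (u,v)) * cnj (M $$ (j,v))"
      by simp
  qed
  also have "\<dots> = (\<Sum>v<b. \<Sum>u<b. M $$ (i,u) * X $$ (u,v) * cnj (M $$ (j,v)))"
    by (simp only: sum_distrib_right)
  finally show ?thesis .
qed

lemma KL_id:
  assumes Ks: "\<forall>K\<in>set Ks. K \<in> carrier_mat (n*m) (d*m)"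
    and id: "msum (d*m) (d*m) (map (\<lambda>K. adj K * K) Ks) = 1\<^sub>m (d*m)"
    and wsum: "(\<Sum>l<m. cnj (w l) * w l) = 1"
  shows "msum d d (map (\<lambda>X. adj X * X) (KL n d m w Ks)) = 1\<^sub>m d"
proof -
  have F: "(\<Sum>K\<leftarrow>Ks. \<Sum>c<n*m. cnj (K $$ (c,u)) * K $$ (c,v)) = (if u = v then 1 else 0)"
    if uv: "u < d*m" "v < d*m" for u v
  proof -
    have "msum (d*m) (d*m) (map (\<lambda>K. adj K * K) Ks) $$ (u,v) = (\<Sum>A\<leftarrow>map (\<lambda>K. adj K * K) Ks. A $$ (u,v))"
      by (rule msum_index[OF H6[OF Ks] uv])
    also have "\<dots> = (\<Sum>K\<leftarrow>Ks. (adj K * K) $$ (u,v))"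
      by (simp only: map_map o_def)
    also have "\<dots> = (\<Sum>K\<leftarrow>Ks. \<Sum>c<n*m. cnj (K $$ (c,u)) * K $$ (c,v))"
    proof (intro arg_cong[where f=sum_list] map_cong refl)
      fix K assume "K \<in> set Ks"
      then show "(adj K * K) $$ (u,v) = (\<Sum>c<n*m. cnj (K $$ (c,u)) * K $$ (c,v))"
        using Ks uv by (intro H4) auto
    qed
    finally show ?thesis using id uv by simp
  qed
  have KLc: "\<forall>X\<in>set (KL n d m w Ks). X \<in> carrier_mat n d" by (rule KL_carrier[OF Ks])
  show ?thesis
  proof (rule eq_matI)
    fix i j assume "i < dim_row (1\<^sub>m d :: complex mat)" "j < dim_col (1\<^sub>m d :: complex mat)"
    then have ij: "i < d" "j < d" by auto
    have "msum d d (map (\<lambda>X. adj X * X) (KL n d m w Ks)) $$ (i,j) = (\<Sum>A\<leftarrow>map (\<lambda>X. adj X * X) (KL n d m w Ks). A $$ (i,j))"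
      by (rule msum_index[OF H6[OF KLc] ij])
    also have "\<dots> = (\<Sum>X\<leftarrow>KL n d m w Ks. (adj X * X) $$ (i,j))"
      by (simp only: map_map o_def)
    also have "\<dots> = (\<Sum>K\<leftarrow>Ks. \<Sum>a<m. \<Sum>l<m. (adj (Bop n m a * K * Aop d m w l) * (Bop n m a * K * Aop d m w l)) $$ (i,j))"
      by (rule KL_sum)
    also have "\<dots> = (\<Sum>K\<leftarrow>Ks. \<Sum>a<m. \<Sum>l<m. \<Sum>t<n. cnj (K $$ (t*m+a, i*m+l) * w l) * (K $$ (t*m+a, j*m+l) * w l))"
    proof (intro arg_cong[where f=sum_list] map_cong refl sum.cong)
      fix K a l assume K: "K \<in> set Ks" and a: "a \<in> {..<m}" and l: "l \<in> {..<m}"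
      define M where "M = mat n d (\<lambda>(r,i). K $$ (r*m+a, i*m+l) * w l)"
      have BKAe: "Bop n m a * K * Aop d m w l = M" unfolding M_def using K a l Ks by (intro BKA) auto
      have Mc: "M \<in> carrier_mat n d" by (simp add: M_def)
      have "(adj M * M) $$ (i,j) = (\<Sum>t<n. cnj (M $$ (t,i)) * M $$ (t,j))" by (rule H4[OF Mc ij])
      also have "\<dots> = (\<Sum>t<n. cnj (K $$ (t*m+a, i*m+l) * w l) * (K $$ (t*m+a, j*m+l) * w l))"
        using ij by (intro sum.cong refl) (simp add: M_def)
      finally show "(adj (Bop n m a * K * Aop d m w l) * (Bop n m a * K * Aop d m w l)) $$ (i,j)
         = (\<Sum>t<n. cnj (K $$ (t*m+a, i*m+l) * w l) * (K $$ (t*m+a, j*m+l) * w l))"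
        unfolding BKAe .
    qed
    also have "\<dots> = (\<Sum>K\<leftarrow>Ks. \<Sum>l<m. (cnj (w l) * w l) * (\<Sum>c<n*m. cnj (K $$ (c, i*m+l)) * K $$ (c, j*m+l)))"
    proof (intro arg_cong[where f=sum_list] map_cong refl)
      fix K
      have "(\<Sum>a<m. \<Sum>l<m. \<Sum>t<n. cnj (K $$ (t*m+a, i*m+l) * w l) * (K $$ (t*m+a, j*m+l) * w l))
         = (\<Sum>l<m. \<Sum>a<m. \<Sum>t<n. cnj (K $$ (t*m+a, i*m+l) * w l) * (K $$ (t*m+a, j*m+l) * w l))"
        by (rule sum.swap)
      also have "\<dots> = (\<Sum>l<m. \<Sum>t<n. \<Sum>a<m. cnj (K $$ (t*m+a, i*m+l) * w l) * (K $$ (t*m+a, j*m+l) * w l))"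
        by (rule sum.cong[OF refl]) (rule sum.swap)
      also have "\<dots> = (\<Sum>l<m. \<Sum>c<n*m. cnj (K $$ (c, i*m+l) * w l) * (K $$ (c, j*m+l) * w l))"
        by (rule sum.cong[OF refl]) (rule sum_split_mult[symmetric])
      also have "\<dots> = (\<Sum>l<m. \<Sum>c<n*m. (cnj (w l) * w l) * (cnj (K $$ (c, i*m+l)) * K $$ (c, j*m+l)))"
        by (intro sum.cong refl) (simp only: complex_cnj_mult mult_ac)
      also have "\<dots> = (\<Sum>l<m. (cnj (w l) * w l) * (\<Sum>c<n*m. cnj (K $$ (c, i*m+l)) * K $$ (c, j*m+l)))"
        by (simp only: sum_distrib_left)
      finally show "(\<Sum>a<m. \<Sum>l<m. \<Sum>t<n. cnj (K $$ (t*m+a, i*m+l) * w l) * (K $$ (t*m+a, j*m+l) * w l))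
         = (\<Sum>l<m. (cnj (w l) * w l) * (\<Sum>c<n*m. cnj (K $$ (c, i*m+l)) * K $$ (c, j*m+l)))" .
    qed
    also have "\<dots> = (\<Sum>l<m. \<Sum>K\<leftarrow>Ks. (cnj (w l) * w l) * (\<Sum>c<n*m. cnj (K $$ (c, i*m+l)) * K $$ (c, j*m+l)))"
      by (rule sum_list_sum_comm)
    also have "\<dots> = (\<Sum>l<m. (cnj (w l) * w l) * (\<Sum>K\<leftarrow>Ks. \<Sum>c<n*m. cnj (K $$ (c, i*m+l)) * K $$ (c, j*m+l)))"
      by (simp only: sum_list_const_mult)
    also have "\<dots> = (\<Sum>l<m. (cnj (w l) * w l) * (if i = j then 1 else 0))"
    proof (intro sum.cong refl)
      fix l assume "l \<in> {..<m}"
      then have "i*m+l < d*m" "j*m+l < d*m" using ij idx_lt by auto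
      moreover have "(i*m+l = j*m+l) = (i = j)" using \<open>l \<in> {..<m}\<close> by auto
      ultimately show "(cnj (w l) * w l) * (\<Sum>K\<leftarrow>Ks. \<Sum>c<n*m. cnj (K $$ (c, i*m+l)) * K $$ (c, j*m+l))
          = (cnj (w l) * w l) * (if i = j then 1 else 0)" by (simp only: F)
    qed
    also have "\<dots> = (if i = j then 1 else 0)"
      using wsum by (simp only: sum_distrib_right[symmetric]) simp
    finally show "msum d d (map (\<lambda>X. adj X * X) (KL n d m w Ks)) $$ (i,j) = 1\<^sub>m d $$ (i,j)" using ij by simp
  next
    have "msum d d (map (\<lambda>X. adj X * X) (KL n d m w Ks)) \<in> carrier_mat d d"
      by (rule msum_carrier[OF H6[OF KLc]])
    then show "dim_row (msum d d (map (\<lambda>X. adj X * X) (KL n d m w Ks))) = dim_row (1\<^sub>m d :: complex mat)"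
       "dim_col (msum d d (map (\<lambda>X. adj X * X) (KL n d m w Ks))) = dim_col (1\<^sub>m d :: complex mat)"
      by auto
  qed
qed



lemma divmod_simp: "(l::nat) < m \<Longrightarrow> (u*m+l) div m = u" "(l::nat) < m \<Longrightarrow> (u*m+l) mod m = l"
  by simp_all

lemma E1:
  assumes K: "K \<in> carrier_mat (n*m) (d*m)"
    and Z: "Z \<in> carrier_mat (d*m) (d*m)"
    and Zent: "\<forall>x<d*m. \<forall>y<d*m. Z $$ (x,y) = X $$ (x div m, y div m) *
        (if x mod m = y mod m then w (x mod m) * cnj (w (x mod m)) else 0)"
    and pq: "p < n*m" "q < n*m"
  shows "(K * Z * adj K) $$ (p,q) = (\<Sum>l<m. \<Sum>v<d. \<Sum>u<d. K $$ (p,u*m+l) * w l * X $$ (u,v) * (cnj (K $$ (q,v*m+l)) * cnj (w l)))"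
proof -
  have KZ: "K * Z \<in> carrier_mat (n*m) (d*m)" using K Z by simp
  have "(K * Z * adj K) $$ (p,q) = (\<Sum>y<d*m. (K*Z) $$ (p,y) * adj K $$ (y,q))"
    by (rule mult_index[OF KZ]) (use K pq in auto)
  also have "\<dots> = (\<Sum>y<d*m. \<Sum>x<d*m. K $$ (p,x) * Z $$ (x,y) * cnj (K $$ (q,y)))"
    using K Z pq by (intro sum.cong refl) (simp add: mult_index[OF K Z] adj_index sum_distrib_right del: index_mult_mat)
  also have "\<dots> = (\<Sum>v<d. \<Sum>l'<m. \<Sum>u<d. \<Sum>l<m. K $$ (p,u*m+l) * Z $$ (u*m+l,v*m+l') * cnj (K $$ (q,v*m+l')))"
    by (simp only: sum_split_mult)
  also have "\<dots> = (\<Sum>v<d. \<Sum>l'<m. \<Sum>u<d. \<Sum>l<m. if l = l' then K $$ (p,u*m+l') * (X $$ (u,v) * (w l' * cnj (w l'))) * cnj (K $$ (q,v*m+l')) else 0)"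
    using Zent by (intro sum.cong refl) (auto simp: idx_lt)
  also have "\<dots> = (\<Sum>v<d. \<Sum>l'<m. \<Sum>u<d. K $$ (p,u*m+l') * (X $$ (u,v) * (w l' * cnj (w l'))) * cnj (K $$ (q,v*m+l')))"
    by simp
  also have "\<dots> = (\<Sum>l<m. \<Sum>v<d. \<Sum>u<d. K $$ (p,u*m+l) * (X $$ (u,v) * (w l * cnj (w l))) * cnj (K $$ (q,v*m+l)))"
    by (rule sum.swap)
  also have "\<dots> = (\<Sum>l<m. \<Sum>v<d. \<Sum>u<d. K $$ (p,u*m+l) * w l * X $$ (u,v) * (cnj (K $$ (q,v*m+l)) * cnj (w l)))"
    by (intro sum.cong refl) (simp add: algebra_simps)
  finally show ?thesis .
qed



lemma KL_out:
  assumes Ks: "\<forall>K\<in>set Ks. K \<in> carrier_mat (n*m) (d*m)"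
    and X: "X \<in> carrier_mat d d"
    and Z: "Z \<in> carrier_mat (d*m) (d*m)"
    and Zent: "\<forall>x<d*m. \<forall>y<d*m. Z $$ (x,y) = X $$ (x div m, y div m) *
        (if x mod m = y mod m then w (x mod m) * cnj (w (x mod m)) else 0)"
  shows "ptr n m (msum (n*m) (n*m) (map (\<lambda>K. K * Z * adj K) Ks))
       = msum n n (map (\<lambda>Y. Y * X * adj Y) (KL n d m w Ks))"
proof -
  have KLc: "\<forall>Y\<in>set (KL n d m w Ks). Y \<in> carrier_mat n d" by (rule KL_carrier[OF Ks])
  have car: "\<forall>Y\<in>set (map (\<lambda>Y. Y * X * adj Y) (KL n d m w Ks)). Y \<in> carrier_mat n n"
    by (rule H7[OF KLc X])
  have car2: "\<forall>Y\<in>set (map (\<lambda>K. K * Z * adj K) Ks). Y \<in> carrier_mat (n*m) (n*m)"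
    by (rule H7[OF Ks Z])
  have Rc: "msum n n (map (\<lambda>Y. Y * X * adj Y) (KL n d m w Ks)) \<in> carrier_mat n n"
    by (rule msum_carrier[OF car])
  show ?thesis
  proof (rule eq_matI)
    show "dim_row (ptr n m (msum (n*m) (n*m) (map (\<lambda>K. K * Z * adj K) Ks))) = dim_row (msum n n (map (\<lambda>Y. Y * X * adj Y) (KL n d m w Ks)))"
         "dim_col (ptr n m (msum (n*m) (n*m) (map (\<lambda>K. K * Z * adj K) Ks))) = dim_col (msum n n (map (\<lambda>Y. Y * X * adj Y) (KL n d m w Ks)))"
      using Rc by (simp_all add: ptr_def)
    fix i j assume "i < dim_row (msum n n (map (\<lambda>Y. Y * X * adj Y) (KL n d m w Ks)))"
       "j < dim_col (msum n n (map (\<lambda>Y. Y * X * adj Y) (KL n d m w Ks)))"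
    then have ij: "i < n" "j < n" using Rc by auto
    have "ptr n m (msum (n*m) (n*m) (map (\<lambda>K. K * Z * adj K) Ks)) $$ (i,j)
        = (\<Sum>a<m. msum (n*m) (n*m) (map (\<lambda>K. K * Z * adj K) Ks) $$ (i*m+a, j*m+a))"
      using ij by (simp add: ptr_def)
    also have "\<dots> = (\<Sum>a<m. \<Sum>K\<leftarrow>Ks. (K * Z * adj K) $$ (i*m+a, j*m+a))"
    proof (rule sum.cong[OF refl])
      fix a assume a: "a \<in> {..<m}"
      have "msum (n*m) (n*m) (map (\<lambda>K. K * Z * adj K) Ks) $$ (i*m+a, j*m+a)
          = (\<Sum>A\<leftarrow>map (\<lambda>K. K * Z * adj K) Ks. A $$ (i*m+a, j*m+a))"
        using a ij by (intro msum_index[OF car2] idx_lt) auto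
      then show "msum (n*m) (n*m) (map (\<lambda>K. K * Z * adj K) Ks) $$ (i*m+a, j*m+a)
          = (\<Sum>K\<leftarrow>Ks. (K * Z * adj K) $$ (i*m+a, j*m+a))"
        by (simp only: map_map o_def)
    qed
    also have "\<dots> = (\<Sum>a<m. \<Sum>K\<leftarrow>Ks. \<Sum>l<m. \<Sum>v<d. \<Sum>u<d. K $$ (i*m+a,u*m+l) * w l * X $$ (u,v) * (cnj (K $$ (j*m+a,v*m+l)) * cnj (w l)))"
    proof (intro sum.cong[OF refl] arg_cong[where f=sum_list] map_cong[OF refl])
      fix a K assume a: "a \<in> {..<m}" and K: "K \<in> set Ks"
      show "(K * Z * adj K) $$ (i*m+a, j*m+a) = (\<Sum>l<m. \<Sum>v<d. \<Sum>u<d. K $$ (i*m+a,u*m+l) * w l * X $$ (u,v) * (cnj (K $$ (j*m+a,v*m+l)) * cnj (w l)))"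
        using a ij K Ks by (intro E1[OF _ Z Zent] idx_lt) auto
    qed
    also have "\<dots> = (\<Sum>K\<leftarrow>Ks. \<Sum>a<m. \<Sum>l<m. \<Sum>v<d. \<Sum>u<d. K $$ (i*m+a,u*m+l) * w l * X $$ (u,v) * (cnj (K $$ (j*m+a,v*m+l)) * cnj (w l)))"
      by (rule sum_list_sum_comm[symmetric])
    also have "\<dots> = (\<Sum>K\<leftarrow>Ks. \<Sum>a<m. \<Sum>l<m. (Bop n m a * K * Aop d m w l * X * adj (Bop n m a * K * Aop d m w l)) $$ (i,j))"
    proof (intro arg_cong[where f=sum_list] map_cong[OF refl] sum.cong[OF refl])
      fix K a l assume K: "K \<in> set Ks" and a: "a \<in> {..<m}" and l: "l \<in> {..<m}"
      define M where "M = mat n d (\<lambda>(r,i). K $$ (r*m+a, i*m+l) * w l)"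
      have BKAe: "Bop n m a * K * Aop d m w l = M" unfolding M_def using K a l Ks by (intro BKA) auto
      have Mc: "M \<in> carrier_mat n d" by (simp add: M_def)
      have "(M * X * adj M) $$ (i,j) = (\<Sum>v<d. \<Sum>u<d. M $$ (i,u) * X $$ (u,v) * cnj (M $$ (j,v)))"
        by (rule H5[OF Mc X ij])
      also have "\<dots> = (\<Sum>v<d. \<Sum>u<d. K $$ (i*m+a,u*m+l) * w l * X $$ (u,v) * (cnj (K $$ (j*m+a,v*m+l)) * cnj (w l)))"
        using ij by (intro sum.cong refl) (simp add: M_def)
      finally show "(\<Sum>v<d. \<Sum>u<d. K $$ (i*m+a,u*m+l) * w l * X $$ (u,v) * (cnj (K $$ (j*m+a,v*m+l)) * cnj (w l)))
         = (Bop n m a * K * Aop d m w l * X * adj (Bop n m a * K * Aop d m w l)) $$ (i,j)"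
        unfolding BKAe by (rule sym)
    qed
    also have "\<dots> = (\<Sum>Y\<leftarrow>KL n d m w Ks. (Y * X * adj Y) $$ (i,j))"
      by (rule KL_sum[symmetric])
    also have "\<dots> = (\<Sum>A\<leftarrow>map (\<lambda>Y. Y * X * adj Y) (KL n d m w Ks). A $$ (i,j))"
      by (simp only: map_map o_def)
    also have "\<dots> = msum n n (map (\<lambda>Y. Y * X * adj Y) (KL n d m w Ks)) $$ (i,j)"
      by (rule msum_index[OF car ij, symmetric])
    finally show "ptr n m (msum (n*m) (n*m) (map (\<lambda>K. K * Z * adj K) Ks)) $$ (i,j) = msum n n (map (\<lambda>Y. Y * X * adj Y) (KL n d m w Ks)) $$ (i,j)" .
  qed
qed



lemma dephase_carrier[simp]: "A \<in> carrier_mat r c \<Longrightarrow> dephase A \<in> carrier_mat r c"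
  by (simp add: dephase_def)

lemma kron_carrier[simp]: "A \<in> carrier_mat a b \<Longrightarrow> B \<in> carrier_mat c e \<Longrightarrow> kron A B \<in> carrier_mat (a*c) (b*e)"
  by (simp add: kron_def)

lemma kron_index: "A \<in> carrier_mat a b \<Longrightarrow> B \<in> carrier_mat c e \<Longrightarrow> i < a*c \<Longrightarrow> j < b*e \<Longrightarrow>
   kron A B $$ (i,j) = A $$ (i div c, j div e) * B $$ (i mod c, j mod e)"
  by (simp add: kron_def)

lemma div_mod_eq_imp: "(x::nat) div m = y div m \<Longrightarrow> x mod m = y mod m \<Longrightarrow> x = y"
  by (metis div_mult_mod_eq)

lemma dephase_index: "A \<in> carrier_mat r c \<Longrightarrow> i < r \<Longrightarrow> j < c \<Longrightarrow> dephase A $$ (i,j) = (if i = j then A $$ (i,j) else 0)"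
  by (simp add: dephase_def)

lemma dephase_kron:
  assumes X: "X \<in> carrier_mat d d" and T: "T \<in> carrier_mat m m"
  shows "dephase (kron X T) = kron (dephase X) (dephase T)"
proof (rule eq_matI)
  have KT: "kron X T \<in> carrier_mat (d*m) (d*m)" using X T by simp
  have dX: "dephase X \<in> carrier_mat d d" and dT: "dephase T \<in> carrier_mat m m" using X T by simp_all
  have KT2: "kron (dephase X) (dephase T) \<in> carrier_mat (d*m) (d*m)" using dX dT by simp
  show "dim_row (dephase (kron X T)) = dim_row (kron (dephase X) (dephase T))"
       "dim_col (dephase (kron X T)) = dim_col (kron (dephase X) (dephase T))"
    using KT KT2 by (simp_all add: dephase_def)
  fix i j assume "i < dim_row (kron (dephase X) (dephase T))" "j < dim_col (kron (dephase X) (dephase T))"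
  then have ij: "i < d*m" "j < d*m" using KT2 by auto
  have m: "m > 0" using ij by (cases m) auto
  have dl: "i div m < d" "j div m < d" using ij by (auto simp: less_mult_imp_div_less)
  have ml: "i mod m < m" "j mod m < m" using m by auto
  have L: "dephase (kron X T) $$ (i,j) = (if i = j then X $$ (i div m, j div m) * T $$ (i mod m, j mod m) else 0)"
    using ij KT by (simp add: dephase_def kron_index[OF X T])
  have R0: "kron (dephase X) (dephase T) $$ (i,j) = dephase X $$ (i div m, j div m) * dephase T $$ (i mod m, j mod m)"
    by (rule kron_index[OF dX dT ij])
  have R: "kron (dephase X) (dephase T) $$ (i,j) = (if i div m = j div m then X $$ (i div m, j div m) else 0)
      * (if i mod m = j mod m then T $$ (i mod m, j mod m) else 0)"
    unfolding R0 by (simp only: dephase_index[OF X dl] dephase_index[OF T ml])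
  show "dephase (kron X T) $$ (i,j) = kron (dephase X) (dephase T) $$ (i,j)"
    unfolding L R using div_mod_eq_imp[of i m j] by auto
qed

lemma dephase_idem: "dephase (dephase A) = dephase A"
  by (rule eq_matI) (auto simp: dephase_def)

lemma dephase_ptr:
  assumes "Y \<in> carrier_mat (n*m) (n*m)"
  shows "dephase (ptr n m Y) = ptr n m (dephase Y)"
  by (rule eq_matI) (use assms in \<open>auto simp: dephase_def ptr_def idx_lt intro!: sum.cong\<close>)

lemma proj_kron_index:
  assumes "t < k*e" "i < k*e"
  shows "kron (proj k j) (1\<^sub>m e) $$ (t,i) = (if t = i \<and> i div e = j then 1 else 0)"
proof -
  have e: "e > 0" using assms by (cases e) auto
  have "t div e < k" "i div e < k" using assms by (auto simp: less_mult_imp_div_less)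
  then show ?thesis using assms e div_mod_eq_imp[of t e i]
    by (auto simp: kron_def proj_def)
qed

lemma trQ:
  assumes "Y \<in> carrier_mat (k*e) (k*e)"
  shows "tr (Y * kron (proj k j) (1\<^sub>m e)) = (\<Sum>c<k*e. if c div e = j then Y $$ (c,c) else 0)"
proof -
  have Q: "kron (proj k j) (1\<^sub>m e) \<in> carrier_mat (k*e) (k*e)" by (simp add: kron_def proj_def)
  have "tr (Y * kron (proj k j) (1\<^sub>m e)) = (\<Sum>c<k*e. (Y * kron (proj k j) (1\<^sub>m e)) $$ (c,c))"
    using assms by (simp add: tr_def)
  also have "\<dots> = (\<Sum>c<k*e. \<Sum>t<k*e. if t = c then (if c div e = j then Y $$ (c,c) else 0) else 0)"
  proof (rule sum.cong[OF refl])
    fix c assume c: "c \<in> {..<k*e}"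
    have "(Y * kron (proj k j) (1\<^sub>m e)) $$ (c,c) = (\<Sum>t<k*e. Y $$ (c,t) * kron (proj k j) (1\<^sub>m e) $$ (t,c))"
      using c by (intro mult_index[OF assms Q]) auto
    also have "\<dots> = (\<Sum>t<k*e. if t = c then (if c div e = j then Y $$ (c,c) else 0) else 0)"
      using c by (intro sum.cong refl) (simp add: proj_kron_index)
    finally show "(Y * kron (proj k j) (1\<^sub>m e)) $$ (c,c) = (\<Sum>t<k*e. if t = c then (if c div e = j then Y $$ (c,c) else 0) else 0)" .
  qed
  also have "\<dots> = (\<Sum>c<k*e. if c div e = j then Y $$ (c,c) else 0)" by simp
  finally show ?thesis .
qed



lemma kraus_diag_form:
  assumes K: "K \<in> carrier_mat n d" and c: "c < n" and R: "R \<in> carrier_mat d d"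
  shows "(K * R * adj K) $$ (c,c) = (\<Sum>x<d. \<Sum>y<d. K $$ (c,x) * R $$ (x,y) * cnj (K $$ (c,y)))"
proof -
  have "(K * R * adj K) $$ (c,c) = (\<Sum>y<d. \<Sum>x<d. K $$ (c,x) * R $$ (x,y) * cnj (K $$ (c,y)))"
    by (rule H5[OF K R c c])
  also have "\<dots> = (\<Sum>x<d. \<Sum>y<d. K $$ (c,x) * R $$ (x,y) * cnj (K $$ (c,y)))"
    by (rule sum.swap)
  finally show ?thesis .
qed

lemma psd_diag:
  assumes "psd d R" "K \<in> carrier_mat n d" "c < n"
  shows "0 \<le> Re ((K * R * adj K) $$ (c,c))"
proof -
  have R: "R \<in> carrier_mat d d" using assms by (simp add: psd_def)
  define v where "v = vec d (\<lambda>y. cnj (K $$ (c,y)))"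
  have "v \<in> carrier_vec d" by (simp add: v_def)
  then have "0 \<le> Re (\<Sum>i<d. \<Sum>j<d. cnj (v $ i) * R $$ (i,j) * v $ j)" using assms(1) unfolding psd_def by blast
  also have "(\<Sum>i<d. \<Sum>j<d. cnj (v $ i) * R $$ (i,j) * v $ j) = (\<Sum>x<d. \<Sum>y<d. K $$ (c,x) * R $$ (x,y) * cnj (K $$ (c,y)))"
    by (intro sum.cong refl) (simp add: v_def)
  also have "\<dots> = (K * R * adj K) $$ (c,c)"
    by (rule kraus_diag_form[OF assms(2,3) R, symmetric])
  finally show ?thesis .
qed

lemma sum_list_Re_nonneg: "(\<forall>x\<in>set xs. 0 \<le> Re (f x)) \<Longrightarrow> 0 \<le> Re (\<Sum>x\<leftarrow>xs. f x)"
  by (induction xs) auto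

lemma channel_props:
  assumes ch: "channel d n N" and rho: "density d R"
  shows "N R \<in> carrier_mat n n" "\<forall>c<n. 0 \<le> Re ((N R) $$ (c,c))" "(\<Sum>c<n. (N R) $$ (c,c)) = 1"
proof -
  obtain Ks where Ks: "\<forall>K\<in>set Ks. K \<in> carrier_mat n d"
    and id: "msum d d (map (\<lambda>K. adj K * K) Ks) = 1\<^sub>m d"
    and NX: "\<forall>X\<in>carrier_mat d d. N X = msum n n (map (\<lambda>K. K * X * adj K) Ks)"
    using ch unfolding channel_def by blast
  have psd: "psd d R" using rho by (simp add: density_def)
  have R: "R \<in> carrier_mat d d" using psd by (simp add: psd_def)
  have car: "\<forall>Y\<in>set (map (\<lambda>K. K * R * adj K) Ks). Y \<in> carrier_mat n n"
    by (rule H7[OF Ks R])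
  have NR: "N R = msum n n (map (\<lambda>K. K * R * adj K) Ks)" using NX R by blast
  show "N R \<in> carrier_mat n n" unfolding NR by (rule msum_carrier[OF car])
  have ent: "(N R) $$ (c,c) = (\<Sum>K\<leftarrow>Ks. (K * R * adj K) $$ (c,c))" if c: "c < n" for c
  proof -
    have "(N R) $$ (c,c) = (\<Sum>A\<leftarrow>map (\<lambda>K. K * R * adj K) Ks. A $$ (c,c))"
      unfolding NR by (rule msum_index[OF car c c])
    then show ?thesis by (simp only: map_map o_def)
  qed
  show "\<forall>c<n. 0 \<le> Re ((N R) $$ (c,c))"
  proof (intro allI impI)
    fix c assume c: "c < n"
    have "0 \<le> Re (\<Sum>K\<leftarrow>Ks. (K * R * adj K) $$ (c,c))"
      using Ks c by (intro sum_list_Re_nonneg ballI psd_diag[OF psd]) auto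
    then show "0 \<le> Re ((N R) $$ (c,c))" by (simp only: ent[OF c])
  qed
  have F: "(\<Sum>K\<leftarrow>Ks. \<Sum>c<n. cnj (K $$ (c,y)) * K $$ (c,x)) = (if y = x then 1 else 0)"
    if yx: "y < d" "x < d" for x y
  proof -
    have "msum d d (map (\<lambda>K. adj K * K) Ks) $$ (y,x) = (\<Sum>A\<leftarrow>map (\<lambda>K. adj K * K) Ks. A $$ (y,x))"
      by (rule msum_index[OF H6[OF Ks] yx])
    also have "\<dots> = (\<Sum>K\<leftarrow>Ks. (adj K * K) $$ (y,x))"
      by (simp only: map_map o_def)
    also have "\<dots> = (\<Sum>K\<leftarrow>Ks. \<Sum>c<n. cnj (K $$ (c,y)) * K $$ (c,x))"
    proof (intro arg_cong[where f=sum_list] map_cong refl)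
      fix K assume "K \<in> set Ks"
      then show "(adj K * K) $$ (y,x) = (\<Sum>c<n. cnj (K $$ (c,y)) * K $$ (c,x))"
        using Ks yx by (intro H4) auto
    qed
    finally show ?thesis using id yx by simp
  qed
  have "(\<Sum>c<n. (N R) $$ (c,c)) = (\<Sum>c<n. \<Sum>K\<leftarrow>Ks. \<Sum>x<d. \<Sum>y<d. K $$ (c,x) * R $$ (x,y) * cnj (K $$ (c,y)))"
  proof (rule sum.cong[OF refl])
    fix c assume c: "c \<in> {..<n}"
    have "(N R) $$ (c,c) = (\<Sum>K\<leftarrow>Ks. (K * R * adj K) $$ (c,c))" using c by (intro ent) auto
    also have "\<dots> = (\<Sum>K\<leftarrow>Ks. \<Sum>x<d. \<Sum>y<d. K $$ (c,x) * R $$ (x,y) * cnj (K $$ (c,y)))"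
    proof (intro arg_cong[where f=sum_list] map_cong refl)
      fix K assume "K \<in> set Ks"
      then show "(K * R * adj K) $$ (c,c) = (\<Sum>x<d. \<Sum>y<d. K $$ (c,x) * R $$ (x,y) * cnj (K $$ (c,y)))"
        using Ks c R by (intro kraus_diag_form) auto
    qed
    finally show "(N R) $$ (c,c) = (\<Sum>K\<leftarrow>Ks. \<Sum>x<d. \<Sum>y<d. K $$ (c,x) * R $$ (x,y) * cnj (K $$ (c,y)))" .
  qed
  also have "\<dots> = (\<Sum>K\<leftarrow>Ks. \<Sum>c<n. \<Sum>x<d. \<Sum>y<d. K $$ (c,x) * R $$ (x,y) * cnj (K $$ (c,y)))"
    by (rule sum_list_sum_comm[symmetric])
  also have "\<dots> = (\<Sum>K\<leftarrow>Ks. \<Sum>x<d. \<Sum>y<d. \<Sum>c<n. R $$ (x,y) * (cnj (K $$ (c,y)) * K $$ (c,x)))"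
  proof (intro arg_cong[where f=sum_list] map_cong refl)
    fix K
    have "(\<Sum>c<n. \<Sum>x<d. \<Sum>y<d. K $$ (c,x) * R $$ (x,y) * cnj (K $$ (c,y)))
        = (\<Sum>x<d. \<Sum>c<n. \<Sum>y<d. K $$ (c,x) * R $$ (x,y) * cnj (K $$ (c,y)))" by (rule sum.swap)
    also have "\<dots> = (\<Sum>x<d. \<Sum>y<d. \<Sum>c<n. K $$ (c,x) * R $$ (x,y) * cnj (K $$ (c,y)))"
      by (rule sum.cong[OF refl]) (rule sum.swap)
    also have "\<dots> = (\<Sum>x<d. \<Sum>y<d. \<Sum>c<n. R $$ (x,y) * (cnj (K $$ (c,y)) * K $$ (c,x)))"
      by (intro sum.cong refl) (simp only: mult_ac)
    finally show "(\<Sum>c<n. \<Sum>x<d. \<Sum>y<d. K $$ (c,x) * R $$ (x,y) * cnj (K $$ (c,y)))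
        = (\<Sum>x<d. \<Sum>y<d. \<Sum>c<n. R $$ (x,y) * (cnj (K $$ (c,y)) * K $$ (c,x)))" .
  qed
  also have "\<dots> = (\<Sum>x<d. \<Sum>K\<leftarrow>Ks. \<Sum>y<d. \<Sum>c<n. R $$ (x,y) * (cnj (K $$ (c,y)) * K $$ (c,x)))"
    by (rule sum_list_sum_comm)
  also have "\<dots> = (\<Sum>x<d. \<Sum>y<d. \<Sum>K\<leftarrow>Ks. \<Sum>c<n. R $$ (x,y) * (cnj (K $$ (c,y)) * K $$ (c,x)))"
    by (rule sum.cong[OF refl]) (rule sum_list_sum_comm)
  also have "\<dots> = (\<Sum>x<d. \<Sum>y<d. R $$ (x,y) * (\<Sum>K\<leftarrow>Ks. \<Sum>c<n. cnj (K $$ (c,y)) * K $$ (c,x)))"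
    by (simp only: sum_distrib_left[symmetric] sum_list_const_mult)
  also have "\<dots> = (\<Sum>x<d. \<Sum>y<d. if x = y then R $$ (x,y) else 0)"
  proof (intro sum.cong refl)
    fix x y assume "x \<in> {..<d}" "y \<in> {..<d}"
    then show "R $$ (x,y) * (\<Sum>K\<leftarrow>Ks. \<Sum>c<n. cnj (K $$ (c,y)) * K $$ (c,x)) = (if x = y then R $$ (x,y) else 0)"
      by (simp add: F)
  qed
  also have "\<dots> = (\<Sum>x<d. R $$ (x,x))" by simp
  also have "\<dots> = 1" using rho R by (simp add: density_def tr_def)
  finally show "(\<Sum>c<n. (N R) $$ (c,c)) = 1" .
qed



lemma term_le1:
  assumes "DIO d (k*d) N" "density d R"
  shows "Re (tr (N R * kron (proj k j) (1\<^sub>m d))) \<le> 1"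
proof -
  have ch: "channel d (k*d) N" using assms by (simp add: DIO_def)
  note cp = channel_props[OF ch assms(2)]
  have "Re (tr (N R * kron (proj k j) (1\<^sub>m d))) = Re (\<Sum>c<k*d. if c div d = j then (N R) $$ (c,c) else 0)"
    by (simp only: trQ[OF cp(1)])
  also have "\<dots> = (\<Sum>c<k*d. Re (if c div d = j then (N R) $$ (c,c) else 0))"
    by (rule Re_sum)
  also have "\<dots> = (\<Sum>c<k*d. if c div d = j then Re ((N R) $$ (c,c)) else 0)"
    by (intro sum.cong refl) simp
  also have "\<dots> \<le> (\<Sum>c<k*d. Re ((N R) $$ (c,c)))"
    using cp(2) by (intro sum_mono) auto
  also have "\<dots> = 1" using cp(3) by (simp add: Re_sum[symmetric])
  finally show ?thesis .
qed

lemma value_le1: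
  assumes "ensemble d k p \<rho>" "DIO d (k*d) N"
  shows "(\<Sum>j<k. p j * Re (tr (N (\<rho> j) * kron (proj k j) (1\<^sub>m d)))) \<le> 1"
proof -
  have "(\<Sum>j<k. p j * Re (tr (N (\<rho> j) * kron (proj k j) (1\<^sub>m d)))) \<le> (\<Sum>j<k. p j)"
    using assms term_le1[OF assms(2)] by (intro sum_mono) (auto simp: ensemble_def intro!: mult_left_le)
  also have "\<dots> = 1" using assms by (simp add: ensemble_def)
  finally show ?thesis .
qed

lemma exists_DIO:
  assumes "k \<ge> 1"
  shows "\<exists>N. DIO e (k*e) N"
proof -
  define K0 :: "complex mat" where "K0 = mat (k*e) e (\<lambda>(r,c). if r = c then 1 else 0)"
  define N where "N = (\<lambda>X. msum (k*e) (k*e) [K0 * X * adj K0])"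
  have K0: "K0 \<in> carrier_mat (k*e) e" by (simp add: K0_def)
  have le: "e \<le> k*e" using assms by simp
  have id: "adj K0 * K0 = 1\<^sub>m e"
  proof (rule eq_matI)
    fix i j assume "i < dim_row (1\<^sub>m e :: complex mat)" "j < dim_col (1\<^sub>m e :: complex mat)"
    then have ij: "i < e" "j < e" by auto
    have ik: "i < k*e" "j < k*e" using ij le by linarith+
    have "(adj K0 * K0) $$ (i,j) = (\<Sum>t<k*e. adj K0 $$ (i,t) * K0 $$ (t,j))"
      by (rule mult_index[of _ e "k*e" _ e]) (use K0 ij in auto)
    also have "\<dots> = (\<Sum>t<k*e. if t = i then (if i = j then 1 else 0) else 0)"
      using ij ik by (intro sum.cong refl) (auto simp: adj_index K0_def)
    also have "\<dots> = (if i = j then 1 else 0)" using ik by simp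
    finally show "(adj K0 * K0) $$ (i,j) = 1\<^sub>m e $$ (i,j)" using ij by simp
  qed (use K0 in auto)
  have form: "K0 * X * adj K0 = mat (k*e) (k*e) (\<lambda>(r,s). if r < e \<and> s < e then X $$ (r,s) else 0)"
    if X: "X \<in> carrier_mat e e" for X
  proof (rule eq_matI)
    fix r s assume "r < dim_row (mat (k*e) (k*e) (\<lambda>(r,s). if r < e \<and> s < e then X $$ (r,s) else 0))"
      "s < dim_col (mat (k*e) (k*e) (\<lambda>(r,s). if r < e \<and> s < e then X $$ (r,s) else 0))"
    then have rs: "r < k*e" "s < k*e" by auto
    have "(K0 * X * adj K0) $$ (r,s) = (\<Sum>x<e. \<Sum>y<e. K0 $$ (r,x) * X $$ (x,y) * cnj (K0 $$ (s,y)))"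
    proof -
      have KX: "K0 * X \<in> carrier_mat (k*e) e" using K0 X by simp
      have "(K0 * X * adj K0) $$ (r,s) = (\<Sum>y<e. (K0*X) $$ (r,y) * adj K0 $$ (y,s))"
        by (rule mult_index[OF KX]) (use K0 rs in auto)
      also have "\<dots> = (\<Sum>y<e. \<Sum>x<e. K0 $$ (r,x) * X $$ (x,y) * cnj (K0 $$ (s,y)))"
        using K0 X rs by (intro sum.cong refl) (simp add: mult_index[OF K0 X] adj_index sum_distrib_right del: index_mult_mat)
      also have "\<dots> = (\<Sum>x<e. \<Sum>y<e. K0 $$ (r,x) * X $$ (x,y) * cnj (K0 $$ (s,y)))" by (rule sum.swap)
      finally show ?thesis .
    qed
    also have "\<dots> = (\<Sum>x<e. if x = r then (\<Sum>y<e. if y = s then X $$ (x,y) else 0) else 0)"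
    proof (rule sum.cong[OF refl])
      fix x assume x: "x \<in> {..<e}"
      show "(\<Sum>y<e. K0 $$ (r,x) * X $$ (x,y) * cnj (K0 $$ (s,y))) = (if x = r then (\<Sum>y<e. if y = s then X $$ (x,y) else 0) else 0)"
      proof (cases "x = r")
        case True
        have "(\<Sum>y<e. K0 $$ (r,x) * X $$ (x,y) * cnj (K0 $$ (s,y))) = (\<Sum>y<e. if y = s then X $$ (x,y) else 0)"
        proof (rule sum.cong[OF refl])
          fix y assume "y \<in> {..<e}"
          then show "K0 $$ (r,x) * X $$ (x,y) * cnj (K0 $$ (s,y)) = (if y = s then X $$ (x,y) else 0)"
            using True rs x by (auto simp: K0_def)
        qed
        then show ?thesis using True by simp
      next
        case False
        then show ?thesis using rs x by (simp add: K0_def)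
      qed
    qed
    also have "\<dots> = (if r < e then (\<Sum>y<e. if y = s then X $$ (r,y) else 0) else 0)" by simp
    also have "\<dots> = (if r < e \<and> s < e then X $$ (r,s) else 0)" by simp
    finally show "(K0 * X * adj K0) $$ (r,s) = mat (k*e) (k*e) (\<lambda>(r,s). if r < e \<and> s < e then X $$ (r,s) else 0) $$ (r,s)"
      using rs by simp
  qed (use K0 X in auto)
  have NX: "N X = mat (k*e) (k*e) (\<lambda>(r,s). if r < e \<and> s < e then X $$ (r,s) else 0)"
    if X: "X \<in> carrier_mat e e" for X
    using form[OF X] by (simp add: N_def msum_def)
  have "channel e (k*e) N"
    unfolding channel_def
    by (rule exI[of _ "[K0]"]) (use K0 id in \<open>auto simp: N_def msum_def\<close>)
  moreover have "\<forall>X\<in>carrier_mat e e. dephase (N X) = N (dephase X)"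
  proof
    fix X :: "complex mat" assume X: "X \<in> carrier_mat e e"
    show "dephase (N X) = N (dephase X)"
      unfolding NX[OF X] NX[OF dephase_carrier[OF X]]
      by (rule eq_matI) (use X in \<open>auto simp: dephase_def\<close>)
  qed
  ultimately show ?thesis unfolding DIO_def by blast
qed



lemma tau_diag:
  assumes "psd m T" "l < m"
  shows "T $$ (l,l) = complex_of_real (Re (T $$ (l,l)))" "0 \<le> Re (T $$ (l,l))"
proof -
  have h: "T $$ (l,l) = cnj (T $$ (l,l))" using assms unfolding psd_def by blast
  have "Im (T $$ (l,l)) = Im (cnj (T $$ (l,l)))" using h by (rule arg_cong)
  then have "Im (T $$ (l,l)) = 0" by simp
  then show "T $$ (l,l) = complex_of_real (Re (T $$ (l,l)))" by (simp add: complex_eq_iff)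
  define u :: "complex vec" where "u = unit_vec m l"
  have uc: "u \<in> carrier_vec m" by (simp add: u_def)
  then have "0 \<le> Re (\<Sum>i<m. \<Sum>j<m. cnj (u $ i) * T $$ (i,j) * u $ j)"
    using assms(1) unfolding psd_def by blast
  also have "(\<Sum>i<m. \<Sum>j<m. cnj (u $ i) * T $$ (i,j) * u $ j) = (\<Sum>i<m. if i = l then (\<Sum>j<m. if j = l then T $$ (i,j) else 0) else 0)"
  proof (rule sum.cong[OF refl])
    fix i assume i: "i \<in> {..<m}"
    show "(\<Sum>j<m. cnj (u $ i) * T $$ (i,j) * u $ j) = (if i = l then (\<Sum>j<m. if j = l then T $$ (i,j) else 0) else 0)"
    proof (cases "i = l")
      case True
      have "(\<Sum>j<m. cnj (u $ i) * T $$ (i,j) * u $ j) = (\<Sum>j<m. if j = l then T $$ (i,j) else 0)"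
      proof (rule sum.cong[OF refl])
        fix j assume "j \<in> {..<m}"
        then show "cnj (u $ i) * T $$ (i,j) * u $ j = (if j = l then T $$ (i,j) else 0)"
          using True assms(2) by (simp add: u_def)
      qed
      then show ?thesis using True by simp
    next
      case False
      then show ?thesis using i assms(2) by (simp add: u_def)
    qed
  qed
  also have "\<dots> = T $$ (l,l)" using assms(2) by simp
  finally show "0 \<le> Re (T $$ (l,l))" .
qed



lemma reduce:
  assumes ens: "ensemble d k p \<rho>" and tau: "density m \<tau>"
    and N': "DIO (d*m) (k*(d*m)) N'"
  shows "\<exists>N. DIO d (k*d) N \<and>
     (\<Sum>j<k. p j * Re (tr (N' (kron (\<rho> j) \<tau>) * kron (proj k j) (1\<^sub>m (d*m)))))
   = (\<Sum>j<k. p j * Re (tr (N (\<rho> j) * kron (proj k j) (1\<^sub>m d))))"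
proof -
  have psdT: "psd m \<tau>" using tau unfolding density_def by blast
  have T: "\<tau> \<in> carrier_mat m m" using psdT unfolding psd_def by blast
  have trT: "tr \<tau> = 1" using tau unfolding density_def by blast
  define w where "w l = complex_of_real (sqrt (Re (\<tau> $$ (l,l))))" for l
  have ww: "w l * cnj (w l) = \<tau> $$ (l,l)" if l: "l < m" for l
  proof -
    note r = tau_diag[OF psdT l]
    have "w l * cnj (w l) = complex_of_real (sqrt (Re (\<tau> $$ (l,l))) * sqrt (Re (\<tau> $$ (l,l))))"
      by (simp only: w_def complex_cnj_complex_of_real of_real_mult)
    also have "sqrt (Re (\<tau> $$ (l,l))) * sqrt (Re (\<tau> $$ (l,l))) = Re (\<tau> $$ (l,l))"
      using r(2) by simp
    finally show ?thesis using r(1) by simp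
  qed
  have ww': "cnj (w l) * w l = \<tau> $$ (l,l)" if "l < m" for l
    using ww[OF that] by (simp only: mult.commute)
  have wsum: "(\<Sum>l<m. cnj (w l) * w l) = 1"
  proof -
    have "(\<Sum>l<m. cnj (w l) * w l) = (\<Sum>l<m. \<tau> $$ (l,l))"
      by (rule sum.cong[OF refl]) (simp add: ww')
    also have "\<dots> = tr \<tau>" using T by (simp add: tr_def)
    finally show ?thesis using trT by simp
  qed
  define \<sigma> where "\<sigma> = dephase \<tau>"
  have S: "\<sigma> \<in> carrier_mat m m" using T by (simp add: \<sigma>_def)
  have chN': "channel (d*m) (k*(d*m)) N'" and dioN': "\<forall>X\<in>carrier_mat (d*m) (d*m). dephase (N' X) = N' (dephase X)"
    using N' unfolding DIO_def by blast+
  obtain Ks where Ks0: "\<forall>K\<in>set Ks. K \<in> carrier_mat (k*(d*m)) (d*m)"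
    and id: "msum (d*m) (d*m) (map (\<lambda>K. adj K * K) Ks) = 1\<^sub>m (d*m)"
    and NX0: "\<forall>X\<in>carrier_mat (d*m) (d*m). N' X = msum (k*(d*m)) (k*(d*m)) (map (\<lambda>K. K * X * adj K) Ks)"
    using chN' unfolding channel_def by blast
  have km: "k*(d*m) = k*d*m" by (simp only: mult.assoc)
  have Ks: "\<forall>K\<in>set Ks. K \<in> carrier_mat (k*d*m) (d*m)" using Ks0 unfolding km .
  have NX: "\<forall>X\<in>carrier_mat (d*m) (d*m). N' X = msum (k*d*m) (k*d*m) (map (\<lambda>K. K * X * adj K) Ks)"
    using NX0 unfolding km .
  have N'car: "N' X \<in> carrier_mat (k*d*m) (k*d*m)" if X: "X \<in> carrier_mat (d*m) (d*m)" for X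
  proof -
    have "N' X = msum (k*d*m) (k*d*m) (map (\<lambda>K. K * X * adj K) Ks)" using NX X by blast
    also have "\<dots> \<in> carrier_mat (k*d*m) (k*d*m)" by (rule msum_carrier[OF H7[OF Ks X]])
    finally show ?thesis .
  qed
  define N where "N X = ptr (k*d) m (N' (kron X \<sigma>))" for X
  have Zc: "kron X \<sigma> \<in> carrier_mat (d*m) (d*m)" if "X \<in> carrier_mat d d" for X
    using that S by (rule kron_carrier)
  have chN: "channel d (k*d) N"
    unfolding channel_def
  proof (intro exI[of _ "KL (k*d) d m w Ks"] conjI ballI)
    show "K \<in> carrier_mat (k*d) d" if "K \<in> set (KL (k*d) d m w Ks)" for K
      using KL_carrier[OF Ks] that by blast
    show "msum d d (map (\<lambda>K. adj K * K) (KL (k*d) d m w Ks)) = 1\<^sub>m d"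
      by (rule KL_id[OF Ks id wsum])
    fix X :: "complex mat" assume X: "X \<in> carrier_mat d d"
    have Zent: "\<forall>x<d*m. \<forall>y<d*m. kron X \<sigma> $$ (x,y) = X $$ (x div m, y div m) *
          (if x mod m = y mod m then w (x mod m) * cnj (w (x mod m)) else 0)"
    proof (intro allI impI)
      fix x y assume xy: "x < d*m" "y < d*m"
      have m0: "m > 0" using xy by (cases m) auto
      have ml: "x mod m < m" "y mod m < m" using m0 by auto
      have "kron X \<sigma> $$ (x,y) = X $$ (x div m, y div m) * \<sigma> $$ (x mod m, y mod m)"
        by (rule kron_index[OF X S xy])
      also have "\<sigma> $$ (x mod m, y mod m) = (if x mod m = y mod m then \<tau> $$ (x mod m, y mod m) else 0)"
        unfolding \<sigma>_def by (rule dephase_index[OF T ml])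
      also have "\<dots> = (if x mod m = y mod m then w (x mod m) * cnj (w (x mod m)) else 0)"
        using ww[OF ml(1)] ww[OF ml(2)] by auto
      finally show "kron X \<sigma> $$ (x,y) = X $$ (x div m, y div m) *
          (if x mod m = y mod m then w (x mod m) * cnj (w (x mod m)) else 0)" .
    qed
    have "N X = ptr (k*d) m (msum (k*d*m) (k*d*m) (map (\<lambda>K. K * kron X \<sigma> * adj K) Ks))"
      unfolding N_def using NX Zc[OF X] by simp
    also have "\<dots> = msum (k*d) (k*d) (map (\<lambda>K. K * X * adj K) (KL (k*d) d m w Ks))"
      by (rule KL_out[OF Ks X Zc[OF X] Zent])
    finally show "N X = msum (k*d) (k*d) (map (\<lambda>K. K * X * adj K) (KL (k*d) d m w Ks))" .
  qed
  have dN: "dephase (N X) = N (dephase X)" if X: "X \<in> carrier_mat d d" for X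
  proof -
    have "dephase (N X) = ptr (k*d) m (dephase (N' (kron X \<sigma>)))"
      unfolding N_def by (rule dephase_ptr[OF N'car[OF Zc[OF X]]])
    also have "dephase (N' (kron X \<sigma>)) = N' (dephase (kron X \<sigma>))" using dioN' Zc[OF X] by blast
    also have "dephase (kron X \<sigma>) = kron (dephase X) \<sigma>"
      using dephase_kron[OF X S] by (simp only: \<sigma>_def dephase_idem)
    finally show ?thesis by (simp only: N_def)
  qed
  have dioN: "DIO d (k*d) N" unfolding DIO_def using chN dN by blast
  have val: "tr (N' (kron (\<rho> j) \<tau>) * kron (proj k j) (1\<^sub>m (d*m))) = tr (N (\<rho> j) * kron (proj k j) (1\<^sub>m d))"
    if j: "j < k" for j
  proof -
    have "density d (\<rho> j)" using ens j unfolding ensemble_def by blast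
    then have R: "\<rho> j \<in> carrier_mat d d" unfolding density_def psd_def by blast
    define Y1 where "Y1 = N' (kron (\<rho> j) \<tau>)"
    define Y2 where "Y2 = N' (kron (\<rho> j) \<sigma>)"
    have RT: "kron (\<rho> j) \<tau> \<in> carrier_mat (d*m) (d*m)" using R T by (rule kron_carrier)
    have Y1c: "Y1 \<in> carrier_mat (k*d*m) (k*d*m)" unfolding Y1_def by (rule N'car[OF RT])
    have Y2c: "Y2 \<in> carrier_mat (k*d*m) (k*d*m)" unfolding Y2_def by (rule N'car[OF Zc[OF R]])
    have dd: "dephase (kron (\<rho> j) \<tau>) = dephase (kron (\<rho> j) \<sigma>)"
      using dephase_kron[OF R T] dephase_kron[OF R S] by (simp only: \<sigma>_def dephase_idem)
    have eqd: "Y1 $$ (x,x) = Y2 $$ (x,x)" if x: "x < k*d*m" for x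
    proof -
      have "Y1 $$ (x,x) = dephase Y1 $$ (x,x)" using dephase_index[OF Y1c x x] by simp
      also have "dephase Y1 = N' (dephase (kron (\<rho> j) \<tau>))" unfolding Y1_def using dioN' RT by blast
      also have "\<dots> = dephase Y2" unfolding Y2_def dd using dioN' Zc[OF R] by metis
      also have "dephase Y2 $$ (x,x) = Y2 $$ (x,x)" using dephase_index[OF Y2c x x] by simp
      finally show ?thesis .
    qed
    have Y1c': "Y1 \<in> carrier_mat (k*(d*m)) (k*(d*m))" using Y1c unfolding km .
    have "tr (Y1 * kron (proj k j) (1\<^sub>m (d*m))) = (\<Sum>x<k*(d*m). if x div (d*m) = j then Y1 $$ (x,x) else 0)"
      by (rule trQ[OF Y1c'])
    also have "\<dots> = (\<Sum>x<k*d*m. if x div (d*m) = j then Y1 $$ (x,x) else 0)"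
      by (simp only: km)
    also have "\<dots> = (\<Sum>x<k*d*m. if x div (d*m) = j then Y2 $$ (x,x) else 0)"
      by (rule sum.cong[OF refl]) (simp add: eqd)
    also have "\<dots> = (\<Sum>c<k*d. \<Sum>a<m. if (c*m+a) div (d*m) = j then Y2 $$ (c*m+a,c*m+a) else 0)"
      by (rule sum_split_mult)
    also have "\<dots> = (\<Sum>c<k*d. if c div d = j then (\<Sum>a<m. Y2 $$ (c*m+a,c*m+a)) else 0)"
    proof (rule sum.cong[OF refl])
      fix c
      have dv: "(c*m+a) div (d*m) = c div d" if "a < m" for a
      proof -
        have "(c*m+a) div (d*m) = (c*m+a) div m div d"
          by (simp only: mult.commute[of d m] div_mult2_eq)
        also have "(c*m+a) div m = c" using that by simp
        finally show ?thesis .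
      qed
      have "(\<Sum>a<m. if (c*m+a) div (d*m) = j then Y2 $$ (c*m+a,c*m+a) else 0)
          = (\<Sum>a<m. if c div d = j then Y2 $$ (c*m+a,c*m+a) else 0)"
        by (rule sum.cong[OF refl]) (simp add: dv)
      also have "\<dots> = (if c div d = j then (\<Sum>a<m. Y2 $$ (c*m+a,c*m+a)) else 0)"
        by simp
      finally show "(\<Sum>a<m. if (c*m+a) div (d*m) = j then Y2 $$ (c*m+a,c*m+a) else 0)
          = (if c div d = j then (\<Sum>a<m. Y2 $$ (c*m+a,c*m+a)) else 0)" .
    qed
    also have "\<dots> = (\<Sum>c<k*d. if c div d = j then ptr (k*d) m Y2 $$ (c,c) else 0)"
      by (rule sum.cong[OF refl]) (simp add: ptr_def)
    also have "\<dots> = tr (ptr (k*d) m Y2 * kron (proj k j) (1\<^sub>m d))"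
      by (rule trQ[symmetric]) (simp add: ptr_def)
    finally show ?thesis by (simp only: Y1_def Y2_def N_def)
  qed
  have "(\<Sum>j<k. p j * Re (tr (N' (kron (\<rho> j) \<tau>) * kron (proj k j) (1\<^sub>m (d*m)))))
   = (\<Sum>j<k. p j * Re (tr (N (\<rho> j) * kron (proj k j) (1\<^sub>m d))))"
    by (rule sum.cong[OF refl]) (simp add: val)
  then show ?thesis using dioN by blast
qed


theorem proposition2:
  fixes d k m :: nat and p :: "nat \<Rightarrow> real" and \<rho> :: "nat \<Rightarrow> complex mat" and \<tau> :: "complex mat"
  assumes "ensemble d k p \<rho>"
    and "density m \<tau>"
  shows "Psuc_DIO (d * m) k p (\<lambda>j. kron (\<rho> j) \<tau>) \<le> Psuc_DIO d k p \<rho>"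
  unfolding Psuc_DIO_def
proof (rule cSup_mono)
  have "k \<ge> 1" using assms(1) by (simp add: ensemble_def)
  then obtain N0 where N0: "DIO (d*m) (k*(d*m)) N0" using exists_DIO by blast
  show "{\<Sum>j<k. p j * Re (tr (N (kron (\<rho> j) \<tau>) * kron (proj k j) (1\<^sub>m (d * m)))) | N. DIO (d * m) (k * (d * m)) N} \<noteq> {}"
    using N0 by blast 
  show "bdd_above {\<Sum>j<k. p j * Re (tr (N (\<rho> j) * kron (proj k j) (1\<^sub>m d))) | N. DIO d (k * d) N}"
  proof (rule bdd_aboveI[where M=1])
    fix x assume "x \<in> {\<Sum>j<k. p j * Re (tr (N (\<rho> j) * kron (proj k j) (1\<^sub>m d))) | N. DIO d (k * d) N}"
    then obtain N where "DIO d (k*d) N" "x = (\<Sum>j<k. p j * Re (tr (N (\<rho> j) * kron (proj k j) (1\<^sub>m d))))"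
      by (auto simp only: mem_Collect_eq)
    then show "x \<le> 1" using value_le1[OF assms(1)] by simp
  qed
  fix b assume "b \<in> {\<Sum>j<k. p j * Re (tr (N (kron (\<rho> j) \<tau>) * kron (proj k j) (1\<^sub>m (d * m)))) | N. DIO (d * m) (k * (d * m)) N}"
  then obtain N' where N': "DIO (d * m) (k * (d * m)) N'"
    and b: "b = (\<Sum>j<k. p j * Re (tr (N' (kron (\<rho> j) \<tau>) * kron (proj k j) (1\<^sub>m (d * m)))))"
    by (auto simp only: mem_Collect_eq)
  obtain N where N: "DIO d (k*d) N" and bN: "b = (\<Sum>j<k. p j * Re (tr (N (\<rho> j) * kron (proj k j) (1\<^sub>m d))))"
    using reduce[OF assms N'] b by metis
  have "b \<in> {\<Sum>j<k. p j * Re (tr (N (\<rho> j) * kron (proj k j) (1\<^sub>m d))) | N. DIO d (k * d) N}"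
    unfolding mem_Collect_eq using N bN by (intro exI[of _ N]) simp
  then show "\<exists>a\<in>{\<Sum>j<k. p j * Re (tr (N (\<rho> j) * kron (proj k j) (1\<^sub>m d))) | N. DIO d (k * d) N}. b \<le> a"
    by (intro bexI[of _ b]) simp_all
qed

end
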